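(* Let $\mathbb{F}\in\{\mathbb{R},\mathbb{C}\}$, and let $S\in\mathsf{GL}_m(\mathbb{F})$ and $T\in\mathsf{GL}_n(\mathbb{F})$ be Perron similarities with $m>1$ and $n>1$. Then $\mathcal{C}(S)\otimes\mathcal{C}(T)$ is a proper subset of $\mathcal{C}(S\otimes T)$.
   Context: For $x\in\mathbb{F}^n$, $D_x$ is the diagonal matrix with $(i,i)$-entry $x_i$; $M\ge0$ means every entry of $M$ is a nonnegative real number. $\mathcal{C}(S)=\{x\in\mathbb{F}^n\mid SD_xS^{-1}\ge 0\}$ for $S\in\mathsf{GL}_n(\mathbb{F})$. An invertible $S$ is a Perron similarity if for some $i$ the column $Se_i$ and the row $e_i^\top S^{-1}$ are both entrywise nonnegative or both entrywise nonpositive (real). $\otimes$ is the Kronecker product; for sets $X,Y$ of vectors, $X\otimes Y=\{x\otimes y\mid x\in X,\ y\in Y\}$. *)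

theory Defs
  imports "HOL-Analysis.Analysis"
begin

definition nonneg :: "'a::real_algebra_1 \<Rightarrow> bool" where
  "nonneg z \<longleftrightarrow> (\<exists>r::real. r \<ge> 0 \<and> z = of_real r)"

definition nonpos :: "'a::real_algebra_1 \<Rightarrow> bool" where
  "nonpos z \<longleftrightarrow> (\<exists>r::real. r \<le> 0 \<and> z = of_real r)"

definition mat_nonneg :: "'a::real_algebra_1 ^'k^'k \<Rightarrow> bool" where
  "mat_nonneg M \<longleftrightarrow> (\<forall>i j. nonneg (M $ i $ j))"

definition diag_mat :: "'a::field ^'k \<Rightarrow> 'a^'k^'k" where
  "diag_mat x = (\<chi> i j. if i = j then x $ i else 0)"

definition cone :: "'a::{field,real_algebra_1} ^'k^'k \<Rightarrow> ('a^'k) set" where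
  "cone S = {x. mat_nonneg (S ** diag_mat x ** matrix_inv S)}"

definition perron_similarity :: "'a::{field,real_algebra_1} ^'k^'k \<Rightarrow> bool" where
  "perron_similarity S \<longleftrightarrow> invertible S \<and>
     (\<exists>i. ((\<forall>k. nonneg (S $ k $ i)) \<and> (\<forall>k. nonneg (matrix_inv S $ i $ k)))
        \<or> ((\<forall>k. nonpos (S $ k $ i)) \<and> (\<forall>k. nonpos (matrix_inv S $ i $ k))))"

definition kron :: "'a::times ^'m^'m \<Rightarrow> 'a^'n^'n \<Rightarrow> 'a^('m \<times> 'n)^('m \<times> 'n)" where
  "kron A B = (\<chi> p q. A $ fst p $ fst q * B $ snd p $ snd q)"

definition kronv :: "'a::times ^'m \<Rightarrow> 'a^'n \<Rightarrow> 'a^('m \<times> 'n)" where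
  "kronv x y = (\<chi> p. x $ fst p * y $ snd p)"

definition kron_set :: "('a::times ^'m) set \<Rightarrow> ('a^'n) set \<Rightarrow> ('a^('m \<times> 'n)) set" where
  "kron_set X Y = {kronv x y | x y. x \<in> X \<and> y \<in> Y}"

end

theory Submission
  imports Defs
begin

lemma minv_props:
  fixes A :: "'a::semiring_1^'n^'n"
  assumes "invertible A"
  shows "A ** matrix_inv A = mat 1 \<and> matrix_inv A ** A = mat 1"
  using assms unfolding invertible_def matrix_inv_def by (rule someI_ex)

lemma minv_unique:
  fixes A :: "'a::semiring_1^'n^'n"
  assumes "A ** B = mat 1" "B ** A = mat 1"
  shows "matrix_inv A = B"
proof -
  have i: "invertible A" using assms unfolding invertible_def by blast
  have "matrix_inv A = matrix_inv A ** (A ** B)" using assms by simp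
  also have "\<dots> = B" using minv_props[OF i] by (simp add: matrix_mul_assoc)
  finally show ?thesis .
qed

lemma kron_mult:
  fixes A C :: "'a::comm_semiring_1^'m^'m" and B D :: "'a^'n^'n"
  shows "kron A B ** kron C D = kron (A ** C) (B ** D)"
proof -
  have "(\<Sum>k\<in>UNIV. A $ fst p $ fst k * B $ snd p $ snd k * (C $ fst k $ fst q * D $ snd k $ snd q))
      = (\<Sum>k\<in>UNIV. A $ fst p $ k * C $ k $ fst q) * (\<Sum>l\<in>UNIV. B $ snd p $ l * D $ l $ snd q)"
    for p :: "'m \<times> 'n" and q :: "'m \<times> 'n"
  proof -
    have "(\<Sum>k\<in>UNIV. A $ fst p $ k * C $ k $ fst q) * (\<Sum>l\<in>UNIV. B $ snd p $ l * D $ l $ snd q)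
        = (\<Sum>k\<in>UNIV. \<Sum>l\<in>UNIV. (A $ fst p $ k * C $ k $ fst q) * (B $ snd p $ l * D $ l $ snd q))"
      by (simp add: sum_product)
    also have "\<dots> = (\<Sum>k\<in>UNIV. A $ fst p $ fst k * B $ snd p $ snd k * (C $ fst k $ fst q * D $ snd k $ snd q))"
      by (simp add: sum.cartesian_product case_prod_beta ac_simps)
    finally show ?thesis by simp
  qed
  then show ?thesis
    by (simp add: kron_def matrix_matrix_mult_def vec_eq_iff)
qed

lemma kron_mat1: "kron (mat 1 :: 'a::semiring_1^'m^'m) (mat 1 :: 'a^'n^'n) = mat 1"
  by (auto simp: kron_def mat_def vec_eq_iff prod_eq_iff)

lemma kron_inv:
  fixes S :: "'a::comm_semiring_1^'m^'m" and T :: "'a^'n^'n"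
  assumes "invertible S" "invertible T"
  shows "matrix_inv (kron S T) = kron (matrix_inv S) (matrix_inv T)"
  using minv_props[OF assms(1)] minv_props[OF assms(2)]
  by (intro minv_unique) (simp_all add: kron_mult kron_mat1)

lemma diag_kron: "diag_mat (kronv x y) = kron (diag_mat x) (diag_mat y)"
  by (auto simp: diag_mat_def kron_def kronv_def vec_eq_iff prod_eq_iff)

lemma nonneg_mult: "nonneg (a::'a::real_algebra_1) \<Longrightarrow> nonneg b \<Longrightarrow> nonneg (a * b)"
  unfolding nonneg_def by (metis of_real_mult zero_le_mult_iff)

lemma nonpos_mult: "nonpos (a::'a::real_algebra_1) \<Longrightarrow> nonpos b \<Longrightarrow> nonneg (a * b)"
  unfolding nonneg_def nonpos_def by (metis of_real_mult zero_le_mult_iff)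

lemma nonneg_add: "nonneg (a::'a::real_algebra_1) \<Longrightarrow> nonneg b \<Longrightarrow> nonneg (a + b)"
  unfolding nonneg_def by (metis of_real_add add_nonneg_nonneg)

lemma nonneg_01: "nonneg (0::'a::real_algebra_1)" "nonneg (1::'a)"
  unfolding nonneg_def by (metis order_refl of_real_0, metis zero_le_one of_real_1)

lemma kron_cone:
  fixes S :: "'a::real_field^'m^'m" and T :: "'a^'n^'n"
  assumes "invertible S" "invertible T"
  shows "kron_set (cone S) (cone T) \<subseteq> cone (kron S T)"
proof
  fix z assume "z \<in> kron_set (cone S) (cone T)"
  then obtain x y where z: "z = kronv x y" and x: "x \<in> cone S" and y: "y \<in> cone T"
    unfolding kron_set_def by blast
  have "kron S T ** diag_mat z ** matrix_inv (kron S T)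
      = kron (S ** diag_mat x ** matrix_inv S) (T ** diag_mat y ** matrix_inv T)"
    by (simp add: z diag_kron kron_inv[OF assms] kron_mult)
  then show "z \<in> cone (kron S T)" using x y
    by (simp add: cone_def mat_nonneg_def kron_def nonneg_mult)
qed

lemma perron_entry:
  fixes S :: "'a::real_field^'m^'m"
  assumes "perron_similarity S"
  obtains i where "\<And>k l. nonneg (S $ k $ i * matrix_inv S $ i $ l)"
  using assms unfolding perron_similarity_def by (metis nonneg_mult nonpos_mult)

lemma diag_add: "diag_mat (x + y) = diag_mat x + diag_mat (y :: 'a::field^'k)"
  by (auto simp: diag_mat_def vec_eq_iff)

lemma matrix_add_rdistrib': "((B + C) ** A) = (B ** A) + (C ** A)"
  by (vector matrix_matrix_mult_def sum.distrib[symmetric] field_simps)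

lemma mdiag: "(M ** diag_mat x) $ r $ q = M $ r $ q * (x::'a::field^'k) $ q"
  by (simp add: matrix_matrix_mult_def diag_mat_def mult.commute[of "M $ r $ _"] if_distrib cong: if_cong)

lemma proper_part:
  fixes S :: "'a::real_field^'m^'m" and T :: "'a^'n^'n"
  assumes "invertible S" "invertible T" "perron_similarity S" "perron_similarity T"
    "CARD('m) > 1" "CARD('n) > 1"
  shows "\<exists>z \<in> cone (kron S T). z \<notin> kron_set (cone S) (cone T)"
proof -
  obtain i where hi: "\<And>k l. nonneg (S $ k $ i * matrix_inv S $ i $ l)"
    using perron_entry[OF assms(3)] by blast
  obtain j where hj: "\<And>k l. nonneg (T $ k $ j * matrix_inv T $ j $ l)"
    using perron_entry[OF assms(4)] by blast
  define p where "p = (i, j)"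
  define e :: "'a^('m\<times>'n)" where "e = (\<chi> q. if q = p then 1 else 0)"
  define z :: "'a^('m\<times>'n)" where "z = (\<chi> q. (1::'a)) + e"
  define M where "M = kron S T"
  have Mi: "M ** matrix_inv M = mat 1"
    unfolding M_def kron_inv[OF assms(1,2)]
    using minv_props[OF assms(1)] minv_props[OF assms(2)] by (simp add: kron_mult kron_mat1)
  have d1: "diag_mat (\<chi> q. (1::'a)) = mat 1" by (simp add: diag_mat_def mat_def vec_eq_iff)
  have eq: "M ** diag_mat z ** matrix_inv M = mat 1 + M ** diag_mat e ** matrix_inv M"
    unfolding z_def diag_add matrix_add_ldistrib matrix_add_rdistrib' d1 by (simp add: Mi)
  have ent: "(M ** diag_mat e ** matrix_inv M) $ r $ s = M $ r $ p * matrix_inv M $ p $ s" for r s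
  proof -
    have "(M ** diag_mat e ** matrix_inv M) $ r $ s = (\<Sum>k\<in>UNIV. (M ** diag_mat e) $ r $ k * matrix_inv M $ k $ s)"
      by (simp add: matrix_matrix_mult_def)
    also have "\<dots> = (\<Sum>k\<in>UNIV. if k = p then M $ r $ p * matrix_inv M $ p $ s else 0)"
      by (rule sum.cong) (auto simp: mdiag e_def)
    also have "\<dots> = M $ r $ p * matrix_inv M $ p $ s" by simp
    finally show ?thesis .
  qed
  have "nonneg (M $ r $ p * matrix_inv M $ p $ s)" for r s
  proof -
    have "M $ r $ p * matrix_inv M $ p $ s
       = (S $ fst r $ i * matrix_inv S $ i $ fst s) * (T $ snd r $ j * matrix_inv T $ j $ snd s)"
      unfolding M_def kron_inv[OF assms(1,2)] by (simp add: kron_def p_def ac_simps)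
    then show ?thesis using hi hj nonneg_mult by metis
  qed
  then have "nonneg ((M ** diag_mat z ** matrix_inv M) $ r $ s)" for r s
  proof -
    have "(M ** diag_mat z ** matrix_inv M) $ r $ s = (if r = s then 1 else 0) + M $ r $ p * matrix_inv M $ p $ s"
      unfolding eq by (simp add: ent mat_def)
    moreover have "nonneg (if r = s then 1 else (0::'a))" by (simp add: nonneg_01)
    ultimately show ?thesis using nonneg_add[of "if r = s then 1 else (0::'a)" "M $ r $ p * matrix_inv M $ p $ s"]
      \<open>\<And>r s. nonneg (M $ r $ p * matrix_inv M $ p $ s)\<close> by metis
  qed
  then have zc: "z \<in> cone M"
    unfolding cone_def mat_nonneg_def by blast
  have "z \<noteq> kronv x y" for x y
  proof
    assume h: "z = kronv x y"
    have "\<exists>a::'m. a \<noteq> i"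
    proof (rule ccontr)
      assume "\<not> ?thesis" then have "UNIV = {i}" by auto
      then show False using assms(5) by (metis card_1_singleton_iff less_irrefl One_nat_def)
    qed
    then obtain a where a: "a \<noteq> i" by blast
    have "\<exists>b::'n. b \<noteq> j"
    proof (rule ccontr)
      assume "\<not> ?thesis" then have "UNIV = {j}" by auto
      then show False using assms(6) by (metis card_1_singleton_iff less_irrefl One_nat_def)
    qed
    then obtain b where b: "b \<noteq> j" by blast
    have v: "\<And>q. z $ q = x $ fst q * y $ snd q" using h by (simp add: kronv_def)
    have z1: "z $ (i,b) = 1" "z $ (a,j) = 1" "z $ (a,b) = 1" "z $ (i,j) = 2"
      using a b by (simp_all add: z_def e_def p_def)
    have "z $ (i,b) * z $ (a,j) = z $ (i,j) * z $ (a,b)"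
      unfolding v by (simp add: ac_simps)
    then show False using z1 by simp
  qed
  then show ?thesis using zc unfolding M_def kron_set_def by blast
qed

lemma main_gen:
  fixes S :: "'a::real_field^'m^'m" and T :: "'a^'n^'n"
  assumes "invertible S" "invertible T" "perron_similarity S" "perron_similarity T"
    "CARD('m) > 1" "CARD('n) > 1"
  shows "kron_set (cone S) (cone T) \<subset> cone (kron S T)"
  using kron_cone[OF assms(1,2)] proper_part[OF assms] by blast

theorem theorem4p6:
  shows "(\<forall>(S::real^'m^'m) (T::real^'n^'n).
            invertible S \<and> invertible T \<and> perron_similarity S \<and> perron_similarity T
            \<and> CARD('m) > 1 \<and> CARD('n) > 1
            \<longrightarrow> kron_set (cone S) (cone T) \<subset> cone (kron S T))
       \<and> (\<forall>(S::complex^'m^'m) (T::complex^'n^'n).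
            invertible S \<and> invertible T \<and> perron_similarity S \<and> perron_similarity T
            \<and> CARD('m) > 1 \<and> CARD('n) > 1
            \<longrightarrow> kron_set (cone S) (cone T) \<subset> cone (kron S T))"
  apply (intro conjI allI impI)
   apply (rule main_gen; blast)
  apply (rule main_gen; blast)
  done

end
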